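(* Let $T$ be a tree on $n$ vertices, $q$ a positive integer and $C=(C_1,\dots,C_n)\in(\mathbb{Z}/q\mathbb{Z})^n$. Then the algorithm COMPUTE-EVAL-CSF$(T,q,C)$ described below terminates in $O(n^2(\log q)^2)$ time.
   Context: Algorithm COMPUTE-EVAL-SFS$(T,v,q,C)$, for a tree $T$ rooted at $v$: if $T$ is a single vertex, return the sequence $(1)$. Otherwise let $v_1,\dots,v_k$ be the neighbors of $v$ and $T_i$ the subtree rooted at $v_i$ (component of $T$ minus edge $\{v,v_i\}$ containing $v_i$). Initialize $r_1=1$, $r_j=0$ for $2\le j\le n$, and $d=1$. For $i=1,\dots,k$: copy $t_j\leftarrow r_j$ for $1\le j\le d$; recursively compute $(s_1,\dots,s_m)=$ COMPUTE-EVAL-SFS$(T_i,v_i,q,C)$ ($m$ = number of vertices of $T_i$); set $s_0\leftarrow C_1s_1+\dots+C_ms_m \bmod q$; replace $s_j\leftarrow -s_j$ for $1\le j\le m$; set $r_j\leftarrow0$ for $1\le j\le m+d$; for $1\le j\le d$ and $0\le p\le m$ set $r_{j+p}\leftarrow r_{j+p}+t_js_p \bmod q$; then $d\leftarrow d+m$. Return $(r_1,\dots,r_n)$. Algorithm COMPUTE-EVAL-CSF$(T,q,C)$: pick an arbitrary vertex $v$, compute $(r_1,\dots,r_n)=$ COMPUTE-EVAL-SFS$(T,v,q,C)$, and return $C_1r_1+\dots+C_nr_n \bmod q$. (This outputs the evaluation at $p_i\mapsto C_i$, modulo $q$, of the chromatic symmetric function of $T$ written as an integer polynomial in the power sums $p_1,\dots,p_n$.)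 Time is measured with arithmetic on residues mod $q$ costing $O((\log q)^2)$ per operation. *)

theory Defs
  imports Complex_Main
begin

text \<open>Rooted trees with ordered children: a vertex together with the list of subtrees
  rooted at its neighbours v_1, ..., v_k (in the order in which the algorithm visits them).\<close>
datatype rtree = Node "rtree list"

fun nvert :: "rtree \<Rightarrow> nat" where
  "nvert (Node ts) = Suc (sum_list (map nvert ts))"

text \<open>Bit length of q (number of binary digits); the cost of one arithmetic operation
  on residues mod q is (nbits q)^2, i.e. O((log q)^2), and at least 1.\<close>
definition nbits :: "int \<Rightarrow> nat" where
  "nbits q = (if q \<le> 0 then 0 else nat (floor (log 2 (real_of_int q))) + 1)"

definition cq :: "int \<Rightarrow> nat" where
  "cq q = (nbits q)^2"

text \<open>One iteration of the loop of COMPUTE-EVAL-SFS for a child.  Inputs: the current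
  vector r (list of length n, r!(j-1) = r_j), the current d, the result (s, cs) of the
  recursive call (s!(j-1) = s_j, cs its cost), and the cost c accumulated so far.  Every elementary operation on residues
  (copy, assignment, addition, multiplication, negation, reduction mod q) is charged
  cq q; loop bookkeeping is charged 1.\<close>
definition sfs_step ::
  "int \<Rightarrow> int list \<Rightarrow> int list \<Rightarrow> nat \<Rightarrow> int list \<times> nat \<Rightarrow> nat \<Rightarrow> int list \<times> nat \<times> nat" where
  "sfs_step q C r d sc c =
    (let s = fst sc; cs = snd sc; m = length s;
         t = take d r;
         s0 = (\<Sum>i<m. C ! i * s ! i) mod q;
         s' = s0 # map uminus s;
         r' = map (\<lambda>k. if k \<le> m + d
                        then (\<Sum>j\<in>{1..d}. if j \<le> k \<and> k - j \<le> m
                                             then t ! (j - 1) * s' ! (k - j) else 0) mod q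
                        else r ! (k - 1)) [1..<length r + 1];
         cost = (d + (2 * m + 1) + m + (m + d) + 3 * d * (m + 1)) * cq q + 2
     in (r', d + m, c + cs + cost))"

text \<open>COMPUTE-EVAL-SFS(T, v, q, C) with cost accounting: returns (r_1..r_n) and the cost.\<close>
fun sfs :: "int \<Rightarrow> int list \<Rightarrow> rtree \<Rightarrow> int list \<times> nat"
and sfs_loop :: "int \<Rightarrow> int list \<Rightarrow> rtree list \<Rightarrow> int list \<times> nat \<times> nat \<Rightarrow> int list \<times> nat \<times> nat"
where
  "sfs q C (Node ts) =
     (if ts = [] then ([1], 1)
      else (let n = nvert (Node ts);
                st = sfs_loop q C ts (1 # replicate (n - 1) 0, 1, 0)
            in (fst st, snd (snd st) + n * cq q + 1)))"
| "sfs_loop q C [] st = st"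
| "sfs_loop q C (t # ts) st =
     sfs_loop q C ts (sfs_step q C (fst st) (fst (snd st)) (sfs q C t) (snd (snd st)))"

definition eval_csf :: "int \<Rightarrow> int list \<Rightarrow> rtree \<Rightarrow> int \<times> nat" where
  "eval_csf q C T =
     (let res = sfs q C T; r = fst res; n = length r
      in ((\<Sum>i<n. C ! i * r ! i) mod q, snd res + (2 * n + 1) * cq q + 1))"

end

theory Submission
  imports Defs
begin

lemma nvert_pos: "nvert t \<ge> 1"
  by (cases t) auto

lemma step_arith:
  fixes c cs d m k :: nat
  assumes "d \<ge> 1" "m \<ge> 1" "k \<ge> 1"
    "c + (d - 1) * k \<le> 8 * (d^2 - 1) * k" "cs \<le> 8 * m^2 * k"
  shows "c + cs + ((d + (2 * m + 1) + m + (m + d) + 3 * d * (m + 1)) * k + 2)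
          + (d + m - 1) * k \<le> 8 * ((d + m)^2 - 1) * k"
proof -
  obtain d' where d: "d = Suc d'" using assms(1) by (cases d) auto
  obtain m' where m: "m = Suc m'" using assms(2) by (cases m) auto
  have a: "c + d' * k \<le> 8 * (d'^2 + 2*d') * k"
    using assms(4) unfolding d by (simp add: power2_eq_square algebra_simps)
  have "2 \<le> 2 * k" using assms(3) by simp
  have "(d + (2 * m + 1) + m + (m + d) + 3 * d * (m + 1)) * k + (d + m - 1) * k + 2 * k
        + d' * k + 8 * m^2 * k \<le> 8 * (2*d*m + m^2) * k"
  proof -
    have "(d + (2 * m + 1) + m + (m + d) + 3 * d * (m + 1)) + (d + m - 1) + 2 + d' + 8 * m^2
          \<le> 8 * (2*d*m + m^2)"
      unfolding d m by (simp add: power2_eq_square algebra_simps)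
    then have "((d + (2 * m + 1) + m + (m + d) + 3 * d * (m + 1)) + (d + m - 1) + 2 + d' + 8 * m^2) * k
          \<le> 8 * (2*d*m + m^2) * k" by (rule mult_right_mono) simp
    then show ?thesis by (simp add: algebra_simps)
  qed
  moreover have "8 * ((d + m)^2 - 1) * k = 8 * (d'^2 + 2*d') * k + 8 * (2*d*m + m^2) * k"
    unfolding d by (simp add: power2_eq_square algebra_simps)
  ultimately show ?thesis using a assms(5) \<open>2 \<le> 2 * k\<close> by linarith
qed

lemma main:
  "cq q \<ge> 1 \<Longrightarrow> length (fst (sfs q C T)) = nvert T \<and> snd (sfs q C T) \<le> 8 * nvert T ^ 2 * cq q"
  "cq q \<ge> 1 \<Longrightarrow> fst (snd st) \<ge> 1 \<Longrightarrow>
     snd (snd st) + (fst (snd st) - 1) * cq q \<le> 8 * (fst (snd st) ^ 2 - 1) * cq q \<Longrightarrow>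
     length (fst (sfs_loop q C ts st)) = length (fst st) \<and>
     fst (snd (sfs_loop q C ts st)) = fst (snd st) + sum_list (map nvert ts) \<and>
     snd (snd (sfs_loop q C ts st)) + (fst (snd (sfs_loop q C ts st)) - 1) * cq q
        \<le> 8 * (fst (snd (sfs_loop q C ts st)) ^ 2 - 1) * cq q"
proof (induction q C T and q C ts st rule: sfs_sfs_loop.induct)
  case (1 q C ts)
  show ?case
  proof (cases "ts = []")
    case True
    then show ?thesis using 1 by simp
  next
    case False
    define n where "n = nvert (Node ts)"
    define st where "st = sfs_loop q C ts (1 # replicate (n - 1) 0, 1, 0)"
    have n1: "n \<ge> 1" unfolding n_def by simp
    have pre: "1 \<le> fst (snd (1 # replicate (n - 1) 0 :: int list, 1::nat, 0::nat))"
      "snd (snd (1 # replicate (n - 1) 0 :: int list, 1::nat, 0::nat)) +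
        (fst (snd (1 # replicate (n - 1) 0 :: int list, 1::nat, 0::nat)) - 1) * cq q
       \<le> 8 * ((fst (snd (1 # replicate (n - 1) 0 :: int list, 1::nat, 0::nat)))^2 - 1) * cq q"
      by simp_all
    have "Suc (n - 1) = n" using n1 by simp
    note IH0 = 1(1)[OF False n_def 1(2) pre, folded st_def]
    have c1: "length (fst st) = n" using conjunct1[OF IH0] \<open>Suc (n - 1) = n\<close> by simp
    have dn: "fst (snd st) = n" using conjunct1[OF conjunct2[OF IH0]] unfolding n_def by simp
    have c3: "snd (snd st) + (n - 1) * cq q \<le> 8 * (n ^ 2 - 1) * cq q"
      using conjunct2[OF conjunct2[OF IH0]] unfolding dn .
    have eq: "sfs q C (Node ts) = (fst st, snd (snd st) + n * cq q + 1)"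
      using False by (simp add: n_def st_def Let_def)
    have "snd (snd st) + n * cq q + 1 \<le> 8 * n^2 * cq q"
    proof -
      obtain n' where nn: "n = Suc n'" using n1 by (cases n) auto
      have "snd (snd st) + n' * cq q \<le> 8 * (n'^2 + 2*n') * cq q"
        using c3 nn by (simp add: power2_eq_square algebra_simps)
      moreover have "8 * n^2 * cq q = 8 * (n'^2 + 2*n') * cq q + 8 * cq q"
        using nn by (simp add: power2_eq_square algebra_simps)
      ultimately show ?thesis using 1(2) nn by simp
    qed
    then show ?thesis using eq c1 unfolding n_def by simp
  qed
next
  case (2 q C st)
  then show ?case by simp
next
  case (3 q C t ts st)
  obtain r d c where st: "st = (r, d, c)" by (cases st) auto
  define sc where "sc = sfs q C t"
  have IHt: "length (fst sc) = nvert t \<and> snd sc \<le> 8 * nvert t ^ 2 * cq q"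
    using 3(1)[OF 3(3)] sc_def by simp
  define st' where "st' = sfs_step q C r d sc c"
  have st'eq: "fst st' = map (\<lambda>k. if k \<le> length (fst sc) + d
                        then (\<Sum>j\<in>{1..d}. if j \<le> k \<and> k - j \<le> length (fst sc)
                                             then take d r ! (j - 1) * ((\<Sum>i<length (fst sc). C ! i * fst sc ! i) mod q # map uminus (fst sc)) ! (k - j) else 0) mod q
                        else r ! (k - 1)) [1..<length r + 1]"
     "fst (snd st') = d + nvert t"
     "snd (snd st') = c + snd sc + ((d + (2 * nvert t + 1) + nvert t + (nvert t + d) + 3 * d * (nvert t + 1)) * cq q + 2)"
    unfolding st'_def sfs_step_def Let_def using IHt by simp_all
  have len: "length (fst st') = length r" unfolding st'_def sfs_step_def Let_def by (simp del: upt_Suc)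
  have d1: "d \<ge> 1" using 3(4) st by simp
  have inv: "snd (snd st') + (fst (snd st') - 1) * cq q \<le> 8 * (fst (snd st') ^ 2 - 1) * cq q"
    unfolding st'eq(2,3)
    by (rule step_arith[OF d1 nvert_pos 3(3)]) (use 3(5) st IHt in simp_all)
  have rec: "sfs_loop q C (t # ts) st = sfs_loop q C ts st'"
    by (simp add: st st'_def sc_def)
  have st'_alt: "sfs_step q C (fst st) (fst (snd st)) (sfs q C t) (snd (snd st)) = st'"
    by (simp add: st st'_def sc_def)
  have pos': "1 \<le> fst (snd st')" using st'eq(2) d1 by simp
  note IH2 = 3(2)[OF 3(3), unfolded st'_alt, OF pos' inv]
  have A: "length (fst (sfs_loop q C ts st')) = length r" using conjunct1[OF IH2] len by simp
  have E: "fst (snd (sfs_loop q C ts st')) = d + (nvert t + sum_list (map nvert ts))"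
    using conjunct1[OF conjunct2[OF IH2]] st'eq(2) by simp
  have B: "snd (snd (sfs_loop q C ts st')) + (d + (nvert t + sum_list (map nvert ts)) - 1) * cq q
     \<le> 8 * ((d + (nvert t + sum_list (map nvert ts))) ^ 2 - 1) * cq q"
    using conjunct2[OF conjunct2[OF IH2]] unfolding E .
  show ?case unfolding rec unfolding st fst_conv snd_conv E list.map sum_list.Cons
    using A B by (simp only: simp_thms)
qed

theorem lemma3p9:
  "\<exists>K::nat. \<forall>(T::rtree) (q::int) (C::int list).
     q > 0 \<longrightarrow> length C = nvert T \<longrightarrow> set C \<subseteq> {0..<q} \<longrightarrow>
     snd (eval_csf q C T) \<le> K * (nvert T)^2 * (nbits q)^2"
proof (intro exI allI impI)
  fix T :: rtree and q :: int and C :: "int list"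
  assume q: "q > 0"
  have nb: "nbits q \<ge> 1" using q unfolding nbits_def by simp
  have k: "cq q \<ge> 1" unfolding cq_def using nb by simp
  define n where "n = nvert T"
  have n1: "n \<ge> 1" unfolding n_def by (rule nvert_pos)
  have M: "length (fst (sfs q C T)) = n" "snd (sfs q C T) \<le> 8 * n ^ 2 * cq q"
    using main(1)[OF k, of C T] unfolding n_def by auto
  have e: "snd (eval_csf q C T) = snd (sfs q C T) + (2 * n + 1) * cq q + 1"
    unfolding eval_csf_def Let_def using M(1) by simp
  have sq1: "n \<le> n * n" "1 \<le> n * n" using n1 by (simp_all add: le_square)
  have "(2 * n + 1) + 1 \<le> 4 * n ^ 2" unfolding power2_eq_square using sq1 by linarith
  then have "(2 * n + 1) * cq q + 1 \<le> 4 * n ^ 2 * cq q"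
  proof -
    have "(2 * n + 1) * cq q + 1 \<le> ((2 * n + 1) + 1) * cq q" using k by simp
    also have "\<dots> \<le> 4 * n ^ 2 * cq q" using \<open>(2 * n + 1) + 1 \<le> 4 * n ^ 2\<close> by (rule mult_right_mono) simp
    finally show ?thesis .
  qed
  then show "snd (eval_csf q C T) \<le> 12 * (nvert T)^2 * (nbits q)^2"
    using e M(2) unfolding n_def[symmetric] cq_def by simp
qed

end
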